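(* Every Menger proper $K$-Lusin space is $\sigma$-compact.
   Context: All spaces are completely regular. A space is Lusin if it is an injective continuous image of the space $\mathbb{P}$ of irrationals. A space is proper $K$-Lusin if it admits a perfect map (continuous closed surjection with compact fibers) onto a Lusin subspace of $\mathbb{R}^\omega$. $X$ is Menger if for every sequence $(\mathcal{U}_n)_{n<\omega}$ of open covers there are finite $\mathcal{V}_n\subseteq\mathcal{U}_n$ with $\bigcup_n\mathcal{V}_n$ covering $X$. *)

theory Defs
  imports "HOL-Analysis.Analysis"
begin

definition irrationals_top :: "real topology" where
  "irrationals_top = subtopology euclideanreal (- \<rat>)"

definition lusin_space :: "'a topology \<Rightarrow> bool" where
  "lusin_space X \<longleftrightarrow>
     (\<exists>g. continuous_map irrationals_top X g \<and> inj_on g (topspace irrationals_top)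
          \<and> g ` topspace irrationals_top = topspace X)"

definition real_omega :: "(nat \<Rightarrow> real) topology" where
  "real_omega = product_topology (\<lambda>_. euclideanreal) UNIV"

definition proper_K_lusin :: "'a topology \<Rightarrow> bool" where
  "proper_K_lusin X \<longleftrightarrow>
     (\<exists>(f :: 'a \<Rightarrow> nat \<Rightarrow> real) L. L \<subseteq> topspace real_omega
        \<and> lusin_space (subtopology real_omega L)
        \<and> perfect_map X (subtopology real_omega L) f)"

definition open_cover :: "'a topology \<Rightarrow> 'a set set \<Rightarrow> bool" where
  "open_cover X \<U> \<longleftrightarrow> (\<forall>U\<in>\<U>. openin X U) \<and> topspace X \<subseteq> \<Union>\<U>"

definition menger_space :: "'a topology \<Rightarrow> bool" where
  "menger_space X \<longleftrightarrow>
     (\<forall>\<U> :: nat \<Rightarrow> 'a set set. (\<forall>n. open_cover X (\<U> n)) \<longrightarrow>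
        (\<exists>\<V>. (\<forall>n. finite (\<V> n) \<and> \<V> n \<subseteq> \<U> n) \<and> topspace X \<subseteq> (\<Union>n. \<Union>(\<V> n))))"

definition sigma_compact_space :: "'a topology \<Rightarrow> bool" where
  "sigma_compact_space X \<longleftrightarrow>
     (\<exists>K :: nat \<Rightarrow> 'a set. (\<forall>n. compactin X (K n)) \<and> (\<Union>n. K n) = topspace X)"

end

theory Submission
  imports Defs
begin


lemma lemA_aux:
  fixes t c :: "nat \<Rightarrow> 'a::metric_space"
  assumes tinj: "inj t" and dc: "\<And>k. dist (c k) (t k) < 1/(Suc k)"
    and inf: "\<And>e. e>0 \<Longrightarrow> infinite {k. c k \<in> ball y e}"
  shows "y islimpt range t"
proof (unfold islimpt_approachable, intro allI impI)
  fix e :: real assume e: "e > 0"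
  obtain N::nat where N: "1/(Suc N) < e/2"
    by (metis e half_gt_zero_iff nat_approx_posE of_nat_Suc)
  have fin: "finite ({..N} \<union> {k. t k = y})"
  proof -
    have "{k. t k = y} \<subseteq> t -` {y}" by auto
    moreover have "finite (t -` {y})" using tinj by (simp add: finite_vimageI)
    ultimately show ?thesis by (simp add: finite_subset)
  qed
  have "infinite ({k. c k \<in> ball y (e/2)} - ({..N} \<union> {k. t k = y}))"
    using inf[of "e/2"] e fin by (simp add: Diff_infinite_finite)
  then obtain k where k: "c k \<in> ball y (e/2)" "k > N" "t k \<noteq> y"
  proof -
    from infinite_imp_nonempty[OF \<open>infinite _\<close>] obtain k where
      "k \<in> {k. c k \<in> ball y (e/2)} - ({..N} \<union> {k. t k = y})" by blast
    then show ?thesis using that by auto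
  qed
  have "1/(Suc k) \<le> 1/(Suc N)"
    using k(2) by (simp add: frac_le)
  then have "dist (t k) y < e"
    using dc[of k] k(1) N dist_triangle[of "t k" y "c k"]
    by (simp add: dist_commute)
  then show "\<exists>x'\<in>range t. x' \<noteq> y \<and> dist x' y < e"
    using k(3) by blast
qed

lemma lemA:
  fixes A L :: "'a::metric_space set"
  assumes AL: "A \<subseteq> L" and nc: "\<And>K. compact K \<Longrightarrow> K \<subseteq> L \<Longrightarrow> \<not> A \<subseteq> K"
  obtains c :: "nat \<Rightarrow> 'a" where "inj c" "range c \<subseteq> A" "\<And>y. y \<in> L \<Longrightarrow> \<not> y islimpt range c"
proof -
  define K where "K = L \<inter> closure A"
  have "\<not> compact K" using nc[of K] AL closure_subset unfolding K_def by blast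
  then obtain T where T: "infinite T" "T \<subseteq> K" "\<And>x. x \<in> K \<Longrightarrow> \<not> x islimpt T"
    unfolding compact_eq_Bolzano_Weierstrass by blast
  obtain t :: "nat \<Rightarrow> 'a" where t: "inj t" "range t \<subseteq> T"
    using infinite_countable_subset[OF T(1)] by blast
  have "\<forall>k. \<exists>a\<in>A. dist a (t k) < 1/(Suc k)"
  proof
    fix k
    have "t k \<in> closure A" using t T(2) unfolding K_def by blast
    then show "\<exists>a\<in>A. dist a (t k) < 1/(Suc k)"
      unfolding closure_approachable by simp
  qed
  then obtain c' where c': "\<And>k. c' k \<in> A" "\<And>k. dist (c' k) (t k) < 1/(Suc k)"
    by metis
  have key: False if y: "y \<in> L" and inf: "\<And>e. e>0 \<Longrightarrow> infinite {k. c' k \<in> ball y e}" for y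
  proof -
    have l: "y islimpt range t" by (rule lemA_aux[OF t(1) c'(2) inf])
    have "range t \<subseteq> closure A" using t T(2) unfolding K_def by blast
    then have "y \<in> closure A"
      using l closed_limpt islimpt_subset by (metis closed_closure)
    then have "y \<in> K" using y unfolding K_def by blast
    moreover have "y islimpt T" using l t(2) islimpt_subset by blast
    ultimately show False using T(3) by blast
  qed
  have "infinite (range c')"
  proof
    assume "finite (range c')"
    then obtain a where a: "a \<in> range c'" "infinite (c' -` {a})"
      using inf_img_fin_domE[of c' UNIV] by auto
    have "a \<in> L" using a(1) c'(1) AL by blast
    moreover have "infinite {k. c' k \<in> ball a e}" if "e > 0" for e
    proof -
      have "c' -` {a} \<subseteq> {k. c' k \<in> ball a e}" using that by auto
      then show ?thesis using a(2) finite_subset by blast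
    qed
    ultimately show False using key by blast
  qed
  note ic = infinite_countable_subset[OF this]
  obtain c :: "nat \<Rightarrow> 'a" where c: "inj c" "range c \<subseteq> range c'"
    using ic by blast
  show thesis
  proof (rule that[OF c(1)])
    show "range c \<subseteq> A" using c(2) c'(1) by auto
    fix y assume y: "y \<in> L"
    show "\<not> y islimpt range c"
    proof
    assume l: "y islimpt range c"
    have l2: "y islimpt range c'" using islimpt_subset[OF l c(2)] .
    have "infinite {k. c' k \<in> ball y e}" if "e > 0" for e
    proof
      assume "finite {k. c' k \<in> ball y e}"
      then have "finite (c' ` {k. c' k \<in> ball y e})" by simp
      moreover have "c' ` {k. c' k \<in> ball y e} = range c' \<inter> ball y e" by auto
      ultimately show False using l2 that unfolding islimpt_eq_infinite_ball by auto
    qed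
    then show False using key[OF y] by blast
  qed
  qed
qed

lemma lemB:
  fixes c :: "nat \<Rightarrow> 'a::metric_space"
  assumes inj: "inj c" and cL: "range c \<subseteq> L" and nl: "\<And>y. y\<in>L \<Longrightarrow> \<not> y islimpt range c"
    and Ob: "open Ob" "range c \<subseteq> Ob"
  obtains r where "\<And>k. r k > 0" "\<And>k. ball (c k) (2 * r k) \<subseteq> Ob" "\<And>k. r k \<le> 1/Suc k"
    "\<And>k j. k \<noteq> j \<Longrightarrow> ball (c k) (2*r k) \<inter> ball (c j) (2*r j) = {}"
    "\<And>y. y \<in> L \<Longrightarrow> \<exists>e>0. finite {k. cball (c k) (r k) \<inter> ball y e \<noteq> {}}"
proof -
  have sep: "\<exists>e>0. \<forall>x\<in>range c. x \<noteq> y \<longrightarrow> e \<le> dist x y" if "y \<in> L" for y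
    using nl[OF that] unfolding islimpt_approachable by (meson not_less)
  have "\<forall>k. \<exists>e>0. \<forall>x\<in>range c. x \<noteq> c k \<longrightarrow> e \<le> dist x (c k)"
    using sep cL by blast
  then obtain \<rho> where \<rho>: "\<And>k. \<rho> k > 0" "\<And>k x. x \<in> range c \<Longrightarrow> x \<noteq> c k \<Longrightarrow> \<rho> k \<le> dist x (c k)"
    by metis
  have "\<forall>k. \<exists>e>0. ball (c k) e \<subseteq> Ob"
    using Ob open_contains_ball by blast
  then obtain \<epsilon> where \<epsilon>: "\<And>k. \<epsilon> k > 0" "\<And>k. ball (c k) (\<epsilon> k) \<subseteq> Ob"
    by metis
  define r where "r k = min (min (\<rho> k/4) (\<epsilon> k/2)) (1/Suc k)" for k
  show thesis
  proof (rule that)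
    show "r k > 0" for k using \<rho>(1)[of k] \<epsilon>(1)[of k] unfolding r_def by simp
    show "r k \<le> 1/Suc k" for k unfolding r_def by simp
    show "ball (c k) (2 * r k) \<subseteq> Ob" for k
    proof -
      have "ball (c k) (2 * r k) \<subseteq> ball (c k) (\<epsilon> k)"
        unfolding r_def by (intro subset_ball) linarith
      then show ?thesis using \<epsilon>(2)[of k] by blast
    qed
    show "ball (c k) (2*r k) \<inter> ball (c j) (2*r j) = {}" if kj: "k \<noteq> j" for k j
    proof (rule ccontr)
      assume "ball (c k) (2*r k) \<inter> ball (c j) (2*r j) \<noteq> {}"
      then obtain z where z: "dist (c k) z < 2*r k" "dist (c j) z < 2*r j" by auto
      have d: "dist (c k) (c j) < 2*r k + 2*r j"
        using z dist_triangle[of "c k" "c j" z] by (simp add: dist_commute)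
      have ne: "c j \<noteq> c k" using inj kj by (metis injD)
      have "\<rho> k \<le> dist (c j) (c k)" using \<rho>(2)[of "c j" k] ne by simp
      moreover have "\<rho> j \<le> dist (c k) (c j)" using \<rho>(2)[of "c k" j] ne by simp
      moreover have "r k \<le> \<rho> k/4" "r j \<le> \<rho> j/4" unfolding r_def by auto
      ultimately show False using d by (simp add: dist_commute)
    qed
    show "\<exists>e>0. finite {k. cball (c k) (r k) \<inter> ball y e \<noteq> {}}" if y: "y \<in> L" for y
    proof -
      obtain e0 where e0: "e0 > 0" "\<And>x. x \<in> range c \<Longrightarrow> x \<noteq> y \<Longrightarrow> e0 \<le> dist x y"
        using sep[OF y] by blast
      have sub: "{k. cball (c k) (r k) \<inter> ball y (e0/2) \<noteq> {}} \<subseteq> c -` {y} \<union> {..nat \<lceil>2/e0\<rceil>}"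
      proof
        fix k assume "k \<in> {k. cball (c k) (r k) \<inter> ball y (e0/2) \<noteq> {}}"
        then obtain z where z: "dist (c k) z \<le> r k" "dist y z < e0/2" by auto
        show "k \<in> c -` {y} \<union> {..nat \<lceil>2/e0\<rceil>}"
        proof (cases "c k = y")
          case False
          have "e0 \<le> dist (c k) y" using e0(2)[of "c k"] False by simp
          moreover have "dist (c k) y \<le> dist (c k) z + dist y z"
            using dist_triangle[of "c k" y z] by (simp add: dist_commute)
          ultimately have "e0/2 < r k" using z by linarith
          also have "r k \<le> 1/Suc k" unfolding r_def by simp
          finally have "e0/2 < 1/Suc k" .
          then have "e0 * Suc k < 2" using e0(1) by (simp add: field_simps)
          then have "real (Suc k) < 2/e0" using e0(1) by (simp add: field_simps)
          then have "k \<le> nat \<lceil>2/e0\<rceil>" by linarith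
          then show ?thesis by simp
        qed simp
      qed
      have "finite (c -` {y})" using inj by (simp add: finite_vimageI)
      then have "finite (c -` {y} \<union> {..nat \<lceil>2/e0\<rceil>})" by simp
      then show ?thesis using sub e0(1) finite_subset by (metis half_gt_zero)
    qed
  qed
qed

lemma half_lt: "0 < (a::real) \<Longrightarrow> b \<le> a/2 \<Longrightarrow> b < a" by linarith

lemma lemC:
  fixes g :: "real \<Rightarrow> 'a::metric_space"
  assumes cont: "continuous_on (-\<rat>) g" and FQ: "F \<subseteq> -\<rat>" and gL: "g ` (-\<rat>) \<subseteq> L"
    and NC: "\<And>U. open U \<Longrightarrow> U \<inter> F \<noteq> {} \<Longrightarrow> \<not>(\<exists>K. compact K \<and> K \<subseteq> L \<and> g`(U\<inter>F) \<subseteq> K)"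
    and U: "open U" "U \<inter> F \<noteq> {}" and Ob: "open Ob" "g`(U\<inter>F) \<subseteq> Ob" and q: "q \<in> \<rat>" and d: "d > 0"
  obtains x :: "nat \<Rightarrow> real" and \<eta> :: "nat \<Rightarrow> real" and c :: "nat \<Rightarrow> 'a" and r :: "nat \<Rightarrow> real" where
   "\<And>k. x k \<in> U \<inter> F" "\<And>k. \<eta> k > 0" "\<And>k. cball (x k) (\<eta> k) \<subseteq> U" "\<And>k. \<eta> k \<le> d"
   "\<And>k. q \<notin> cball (x k) (\<eta> k)"
   "\<And>k. g ` (cball (x k) (\<eta> k) \<inter> -\<rat>) \<subseteq> ball (c k) (r k)"
   "\<And>k. c k \<in> L" "\<And>k. r k > 0" "\<And>k. ball (c k) (2*r k) \<subseteq> Ob"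
   "\<And>k j. k\<noteq>j \<Longrightarrow> ball (c k) (2*r k) \<inter> ball (c j) (2*r j) = {}"
   "\<And>y. y\<in>L \<Longrightarrow> \<exists>e>0. finite {k. cball (c k) (r k) \<inter> ball y e \<noteq> {}}"
proof -
  have AL: "g`(U\<inter>F) \<subseteq> L" using FQ gL by blast
  obtain c :: "nat \<Rightarrow> 'a" where c: "inj c" "range c \<subseteq> g`(U\<inter>F)" "\<And>y. y \<in> L \<Longrightarrow> \<not> y islimpt range c"
  proof -
    have nc: "\<And>K. compact K \<Longrightarrow> K \<subseteq> L \<Longrightarrow> \<not> g`(U\<inter>F) \<subseteq> K" using NC[OF U] by blast
    show ?thesis
    proof (rule lemA[OF AL])
      fix K assume "compact K" "K \<subseteq> L"
      then show "\<not> g`(U\<inter>F) \<subseteq> K" by (rule nc)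
    qed (rule that; assumption)
  qed
  have cL: "range c \<subseteq> L" using c(2) AL by blast
  have cO: "range c \<subseteq> Ob" using c(2) Ob(2) by blast
  obtain r where r: "\<And>k. r k > 0" "\<And>k. ball (c k) (2 * r k) \<subseteq> Ob" "\<And>k. r k \<le> 1/Suc k"
    "\<And>k j. k \<noteq> j \<Longrightarrow> ball (c k) (2*r k) \<inter> ball (c j) (2*r j) = {}"
    "\<And>y. y \<in> L \<Longrightarrow> \<exists>e>0. finite {k. cball (c k) (r k) \<inter> ball y e \<noteq> {}}"
    using lemB[OF c(1) cL c(3) Ob(1) cO] by blast
  have "\<forall>k. \<exists>x. x \<in> U \<inter> F \<and> g x = c k" using c(2) by (metis image_iff rangeI subsetD)
  then obtain x where x: "\<And>k. x k \<in> U \<inter> F" "\<And>k. g (x k) = c k" by metis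
  have xQ: "x k \<in> -\<rat>" for k using x(1) FQ by blast
  have "\<forall>k. \<exists>\<delta>>0. \<forall>x'\<in>-\<rat>. dist x' (x k) < \<delta> \<longrightarrow> dist (g x') (g (x k)) < r k"
    using cont r(1) xQ unfolding continuous_on_iff by blast
  then obtain \<delta> where \<delta>: "\<And>k. \<delta> k > 0" "\<And>k x'. x' \<in> -\<rat> \<Longrightarrow> dist x' (x k) < \<delta> k \<Longrightarrow> dist (g x') (g (x k)) < r k"
    by metis
  have "\<forall>k. \<exists>e>0. ball (x k) e \<subseteq> U" using U(1) x(1) open_contains_ball by blast
  then obtain e1 where e1: "\<And>k. e1 k > 0" "\<And>k. ball (x k) (e1 k) \<subseteq> U" by metis
  have xq: "x k \<noteq> q" for k using xQ q by auto
  define \<eta> where "\<eta> k = min (min (\<delta> k/2) (e1 k/2)) (min d (\<bar>x k - q\<bar>/2))" for k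
  show thesis
  proof (rule that[of x \<eta> c r])
    show "x k \<in> U \<inter> F" for k by (rule x(1))
    show "\<eta> k > 0" for k using \<delta>(1)[of k] e1(1)[of k] d xq[of k] unfolding \<eta>_def by simp
    show "\<eta> k \<le> d" for k unfolding \<eta>_def by simp
    show "cball (x k) (\<eta> k) \<subseteq> U" for k
    proof -
      have "\<eta> k < e1 k" using e1(1)[of k] unfolding \<eta>_def by simp
      then have "cball (x k) (\<eta> k) \<subseteq> ball (x k) (e1 k)"
        by (auto simp: subset_eq)
      then show ?thesis using e1(2)[of k] by blast
    qed
    show "q \<notin> cball (x k) (\<eta> k)" for k
    proof -
      have "0 < \<bar>x k - q\<bar>" using xq[of k] by simp
      moreover have "\<eta> k \<le> \<bar>x k - q\<bar>/2" unfolding \<eta>_def by (meson min.cobounded2 order_trans)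
      ultimately have "\<eta> k < \<bar>x k - q\<bar>" using half_lt[of "\<bar>x k - q\<bar>" "\<eta> k"] by blast
      then show ?thesis by (simp add: dist_real_def)
    qed
    show "g ` (cball (x k) (\<eta> k) \<inter> -\<rat>) \<subseteq> ball (c k) (r k)" for k
    proof
      fix z assume "z \<in> g ` (cball (x k) (\<eta> k) \<inter> -\<rat>)"
      then obtain x' where x': "x' \<in> cball (x k) (\<eta> k)" "x' \<in> -\<rat>" "z = g x'" by blast
      have "dist x' (x k) < \<delta> k"
        using x'(1) \<delta>(1)[of k] unfolding \<eta>_def by (simp add: dist_commute)
      then have "dist (g x') (c k) < r k" using \<delta>(2)[OF x'(2)] x(2) by simp
      then show "z \<in> ball (c k) (r k)" using x'(3) by (simp add: dist_commute)
    qed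
    show "c k \<in> L" for k using cL by blast
    show "r k > 0" for k by (rule r(1))
    show "ball (c k) (2*r k) \<subseteq> Ob" for k by (rule r(2))
    show "ball (c k) (2*r k) \<inter> ball (c j) (2*r j) = {}" if "k\<noteq>j" for k j using r(4) that by blast
    show "\<exists>e>0. finite {k. cball (c k) (r k) \<inter> ball y e \<noteq> {}}" if "y\<in>L" for y using r(5) that by blast
  qed
qed



locale hur =
  fixes g :: "real \<Rightarrow> 'a::metric_space" and L :: "'a set" and F :: "real set" and q :: "nat \<Rightarrow> real"
  assumes cont: "continuous_on (-\<rat>) g" and FQ: "F \<subseteq> -\<rat>" and gL: "g ` (-\<rat>) \<subseteq> L"
    and NC: "\<And>U. open U \<Longrightarrow> U \<inter> F \<noteq> {} \<Longrightarrow> \<not>(\<exists>K. compact K \<and> K \<subseteq> L \<and> g`(U\<inter>F) \<subseteq> K)"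
    and qQ: "range q = \<rat>" and Fne: "F \<noteq> {}"
begin

definition props :: "nat \<Rightarrow> real set \<Rightarrow> 'a set \<Rightarrow> (nat\<Rightarrow>real) \<Rightarrow> (nat\<Rightarrow>real) \<Rightarrow> (nat\<Rightarrow>'a) \<Rightarrow> (nat\<Rightarrow>real) \<Rightarrow> bool" where
 "props n U Ob x \<eta> c r \<longleftrightarrow> (\<forall>k. x k \<in> U\<inter>F) \<and> (\<forall>k. \<eta> k > 0) \<and> (\<forall>k. cball (x k) (\<eta> k) \<subseteq> U)
    \<and> (\<forall>k. \<eta> k \<le> 1/Suc n) \<and> (\<forall>k. q n \<notin> cball (x k) (\<eta> k))
    \<and> (\<forall>k. g`(cball (x k) (\<eta> k) \<inter> -\<rat>) \<subseteq> ball (c k) (r k)) \<and> (\<forall>k. c k \<in> L) \<and> (\<forall>k. r k > 0)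
    \<and> (\<forall>k. ball (c k) (2*r k) \<subseteq> Ob) \<and> (\<forall>k j. k\<noteq>j \<longrightarrow> ball (c k) (2*r k) \<inter> ball (c j) (2*r j) = {})
    \<and> (\<forall>y\<in>L. \<exists>e>0. finite {k. cball (c k) (r k) \<inter> ball y e \<noteq> {}})"

definition CH :: "nat \<Rightarrow> real set \<Rightarrow> 'a set \<Rightarrow> (nat\<Rightarrow>real) \<times> (nat\<Rightarrow>real) \<times> (nat\<Rightarrow>'a) \<times> (nat\<Rightarrow>real)" where
  "CH n U Ob = (SOME t. props n U Ob (fst t) (fst (snd t)) (fst (snd (snd t))) (snd (snd (snd t))))"

lemma propsD:
  assumes "props n U Ob x \<eta> c r"
  shows "x k \<in> U" "x k \<in> F" "\<eta> k > 0" "cball (x k) (\<eta> k) \<subseteq> U" "\<eta> k \<le> 1/Suc n"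
   "q n \<notin> cball (x k) (\<eta> k)" "g`(cball (x k) (\<eta> k) \<inter> -\<rat>) \<subseteq> ball (c k) (r k)"
   "c k \<in> L" "r k > 0" "ball (c k) (2*r k) \<subseteq> Ob"
   "k\<noteq>j \<Longrightarrow> ball (c k) (2*r k) \<inter> ball (c j) (2*r j) = {}"
   "y\<in>L \<Longrightarrow> \<exists>e>0. finite {k. cball (c k) (r k) \<inter> ball y e \<noteq> {}}"
  using assms by (simp_all add: props_def)

lemma CH:
  assumes "open U" "U \<inter> F \<noteq> {}" "open Ob" "g`(U\<inter>F) \<subseteq> Ob"
  shows "props n U Ob (fst (CH n U Ob)) (fst (snd (CH n U Ob))) (fst (snd (snd (CH n U Ob)))) (snd (snd (snd (CH n U Ob))))"
proof -
  have qn: "q n \<in> \<rat>" using qQ by blast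
  have d: "(0::real) < 1/Suc n" by simp
  obtain x \<eta> c r where "props n U Ob x \<eta> c r"
  proof (rule lemC[OF cont FQ gL NC assms qn d])
    fix x :: "nat \<Rightarrow> real" and \<eta> :: "nat \<Rightarrow> real" and c :: "nat \<Rightarrow> 'a" and r :: "nat \<Rightarrow> real"
    assume "\<And>k. x k \<in> U \<inter> F" "\<And>k. \<eta> k > 0" "\<And>k. cball (x k) (\<eta> k) \<subseteq> U" "\<And>k. \<eta> k \<le> 1/Suc n"
   "\<And>k. q n \<notin> cball (x k) (\<eta> k)"
   "\<And>k. g ` (cball (x k) (\<eta> k) \<inter> -\<rat>) \<subseteq> ball (c k) (r k)"
   "\<And>k. c k \<in> L" "\<And>k. r k > 0" "\<And>k. ball (c k) (2*r k) \<subseteq> Ob"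
   "\<And>k j. k\<noteq>j \<Longrightarrow> ball (c k) (2*r k) \<inter> ball (c j) (2*r j) = {}"
   "\<And>y. y\<in>L \<Longrightarrow> \<exists>e>0. finite {k. cball (c k) (r k) \<inter> ball y e \<noteq> {}}"
    then have "props n U Ob x \<eta> c r" unfolding props_def by (intro conjI allI impI ballI) auto
    then show thesis by (rule that)
  qed
  then have "\<exists>t. props n U Ob (fst t) (fst (snd t)) (fst (snd (snd t))) (snd (snd (snd t)))"
    by (intro exI[of _ "(x,\<eta>,c,r)"]) simp
  then show ?thesis unfolding CH_def by (rule someI_ex)
qed

primrec nd :: "nat list \<Rightarrow> real set \<times> 'a set" where
  "nd [] = (UNIV, UNIV)"
| "nd (k#s) = (let t = CH (length s) (fst (nd s)) (snd (nd s)) in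
     (ball (fst t k) (fst (snd t) k), ball (fst (snd (snd t)) k) (snd (snd (snd t)) k)))"

definition "TT s = CH (length s) (fst (nd s)) (snd (nd s))"
definition "xx s = fst (TT s)"
definition "\<eta>\<eta> s = fst (snd (TT s))"
definition "cc s = fst (snd (snd (TT s)))"
definition "rr s = snd (snd (snd (TT s)))"
definition "Us s = fst (nd s)"
definition "Obs s = snd (nd s)"

fun CC :: "nat list \<Rightarrow> real set" where
  "CC [] = UNIV" | "CC (k#s) = cball (xx s k) (\<eta>\<eta> s k)"
fun DD :: "nat list \<Rightarrow> 'a set" where
  "DD [] = UNIV" | "DD (k#s) = cball (cc s k) (rr s k)"
fun GG :: "nat list \<Rightarrow> 'a set" where
  "GG [] = UNIV" | "GG (k#s) = ball (cc s k) (2 * rr s k)"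

lemma Us_simps [simp]: "Us [] = UNIV" "Us (k#s) = ball (xx s k) (\<eta>\<eta> s k)"
  by (simp_all add: Us_def xx_def \<eta>\<eta>_def TT_def Let_def)
lemma Obs_simps [simp]: "Obs [] = UNIV" "Obs (k#s) = ball (cc s k) (rr s k)"
  by (simp_all add: Obs_def cc_def rr_def TT_def Let_def)

lemma valid: "open (Us s) \<and> Us s \<inter> F \<noteq> {} \<and> open (Obs s) \<and> g`(Us s \<inter> F) \<subseteq> Obs s"
proof (induction s)
  case Nil
  then show ?case using Fne by simp
next
  case (Cons k s)
  have P: "props (length s) (Us s) (Obs s) (xx s) (\<eta>\<eta> s) (cc s) (rr s)"
    using CH[of "Us s" "Obs s" "length s"] Cons.IH
    unfolding xx_def \<eta>\<eta>_def cc_def rr_def TT_def by (simp add: Us_def Obs_def)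
  have x: "xx s k \<in> F" "\<eta>\<eta> s k > 0" using propsD[OF P] by auto
  have "xx s k \<in> Us (k#s) \<inter> F" using x by simp
  moreover have "g`(Us (k#s) \<inter> F) \<subseteq> Obs (k#s)"
  proof -
    have "Us (k#s) \<inter> F \<subseteq> cball (xx s k) (\<eta>\<eta> s k) \<inter> -\<rat>" using FQ by auto
    then have "g`(Us (k#s) \<inter> F) \<subseteq> g`(cball (xx s k) (\<eta>\<eta> s k) \<inter> -\<rat>)" by (rule image_mono)
    also have "\<dots> \<subseteq> Obs (k#s)" using propsD(7)[OF P] by simp
    finally show ?thesis .
  qed
  ultimately show ?case by (metis Obs_simps(2) Us_simps(2) empty_iff open_ball)
qed

lemma PT: "props (length s) (Us s) (Obs s) (xx s) (\<eta>\<eta> s) (cc s) (rr s)"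
  using CH[of "Us s" "Obs s" "length s"] valid[of s]
  unfolding xx_def \<eta>\<eta>_def cc_def rr_def TT_def by (simp add: Us_def Obs_def)

lemma C_sub: "CC (k#s) \<subseteq> Us s" using propsD(4)[OF PT] by simp
lemma U_C: "Us s \<subseteq> CC s" by (cases s) auto
lemma C_nest: "CC (k#s) \<subseteq> CC s" using C_sub U_C by blast
lemma gC: "g`(CC (k#s) \<inter> -\<rat>) \<subseteq> Obs (k#s)" using propsD(7)[OF PT] by simp
lemma r_pos: "rr s k > 0" using propsD(9)[OF PT] by simp
lemma eta_pos: "\<eta>\<eta> s k > 0" using propsD(3)[OF PT] by simp
lemma Ob_D: "Obs s \<subseteq> DD s" by (cases s) auto
lemma D_G: "DD s \<subseteq> GG s"
proof (cases s)
  case (Cons k s1)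
  have "cball (cc s1 k) (rr s1 k) \<subseteq> ball (cc s1 k) (2 * rr s1 k)"
    using r_pos[of s1 k] by (auto simp: subset_eq)
  then show ?thesis using Cons by simp
qed simp
lemma G_Ob: "GG (k#s) \<subseteq> Obs s" using propsD(10)[OF PT] by simp
lemma D_nest: "DD (k#s) \<subseteq> DD s" using D_G G_Ob Ob_D by blast
lemma G_nest: "GG (k#s) \<subseteq> GG s" using G_Ob Ob_D D_G by blast
lemma G_open: "open (GG s)" by (cases s) auto
lemma D_closed: "closed (DD s)" by (cases s) auto
lemma C_closed: "closed (CC s)" by (cases s) auto
lemma sib: "k \<noteq> j \<Longrightarrow> GG (k#s) \<inter> GG (j#s) = {}" using propsD(11)[OF PT] by simp
lemma GL: "cc s k \<in> L \<inter> GG (k#s)" using propsD(8)[OF PT] r_pos[of s k] by simp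
lemma C_q: "q (length s) \<notin> CC (k#s)" using propsD(6)[OF PT] by simp
lemma C_ne: "CC s \<noteq> {}"
proof (cases s)
  case (Cons k s1)
  then show ?thesis using eta_pos[of s1 k] by simp
qed simp
lemma C_diam:
  assumes "z \<in> CC (k#s)" "w \<in> CC (k#s)" shows "dist z w \<le> 2/Suc (length s)"
proof -
  have e: "\<eta>\<eta> s k \<le> 1/Suc (length s)" using propsD(5)[OF PT] by simp
  have "dist z w \<le> dist (xx s k) z + dist (xx s k) w" by (rule dist_triangle3)
  also have "\<dots> \<le> 2 * \<eta>\<eta> s k" using assms by simp
  also have "\<dots> \<le> 2/Suc (length s)" using e by simp
  finally show ?thesis .
qed

lemma disj: "length s = length s' \<Longrightarrow> s \<noteq> s' \<Longrightarrow> GG s \<inter> GG s' = {}"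
proof (induction s arbitrary: s')
  case Nil then show ?case by simp
next
  case (Cons k s1)
  obtain k' s1' where s': "s' = k' # s1'" "length s1' = length s1" using Cons.prems(1) by (cases s') auto
  show ?case
  proof (cases "s1 = s1'")
    case True
    then have kk: "k \<noteq> k'" using Cons.prems(2) s'(1) by simp
    show ?thesis using sib[OF kk, of s1] True s'(1) by simp
  next
    case False
    then have "GG s1 \<inter> GG s1' = {}" using Cons.IH[of s1'] s'(2) by simp
    moreover have "GG (k#s1) \<subseteq> GG s1" "GG s' \<subseteq> GG s1'" using G_nest[of k s1] G_nest[of k' s1'] s'(1) by auto
    ultimately show ?thesis by blast
  qed
qed

lemma lf_child: "y \<in> L \<Longrightarrow> \<exists>e>0. finite {k. DD (k#s) \<inter> ball y e \<noteq> {}}"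
  using propsD(12)[OF PT] by simp

lemma lf_level: "y \<in> L \<Longrightarrow> \<exists>e>0. finite {s. length s = n \<and> DD s \<inter> ball y e \<noteq> {}}"
proof (induction n)
  case 0
  have "{s. length s = 0 \<and> DD s \<inter> ball y 1 \<noteq> {}} \<subseteq> {[]}" by auto
  then show ?case using finite_subset by (intro exI[of _ 1]) auto
next
  case (Suc n)
  then obtain e0 where e0: "e0 > 0" "finite {s. length s = n \<and> DD s \<inter> ball y e0 \<noteq> {}}" by blast
  define S0 where "S0 = {s. length s = n \<and> DD s \<inter> ball y e0 \<noteq> {}}"
  have "\<forall>s1. \<exists>e>0. finite {k. DD (k#s1) \<inter> ball y e \<noteq> {}}" using lf_child Suc.prems by blast
  then obtain es where es: "\<And>s1. es s1 > 0" "\<And>s1. finite {k. DD (k#s1) \<inter> ball y (es s1) \<noteq> {}}"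
    by metis
  define e where "e = Min (insert e0 (es ` S0))"
  have fS0: "finite S0" using e0 unfolding S0_def by simp
  have epos: "e > 0" unfolding e_def using fS0 e0(1) es(1) by auto
  have ee0: "e \<le> e0" unfolding e_def using fS0 by simp
  have ees: "e \<le> es s1" if "s1 \<in> S0" for s1 unfolding e_def using fS0 that by simp
  have sub: "{s. length s = Suc n \<and> DD s \<inter> ball y e \<noteq> {}} \<subseteq>
     (\<Union>s1\<in>S0. (\<lambda>k. k#s1) ` {k. DD (k#s1) \<inter> ball y (es s1) \<noteq> {}})"
  proof
    fix s assume "s \<in> {s. length s = Suc n \<and> DD s \<inter> ball y e \<noteq> {}}"
    then obtain k s1 where s: "s = k#s1" "length s1 = n" "DD (k#s1) \<inter> ball y e \<noteq> {}"
      by (cases s) auto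
    have b1: "ball y e \<subseteq> ball y e0" using ee0 by (intro subset_ball)
    have "DD s1 \<inter> ball y e0 \<noteq> {}" using s(3) D_nest[of k s1] b1 by blast
    then have s1: "s1 \<in> S0" unfolding S0_def using s(2) by simp
    have b2: "ball y e \<subseteq> ball y (es s1)" using ees[OF s1] by (intro subset_ball)
    have "DD (k#s1) \<inter> ball y (es s1) \<noteq> {}" using s(3) b2 by blast
    then show "s \<in> (\<Union>s1\<in>S0. (\<lambda>k. k#s1) ` {k. DD (k#s1) \<inter> ball y (es s1) \<noteq> {}})"
      using s1 s(1) by blast
  qed
  have "finite (\<Union>s1\<in>S0. (\<lambda>k. k#s1) ` {k. DD (k#s1) \<inter> ball y (es s1) \<noteq> {}})"
    using fS0 es(2) by simp
  then show ?case using sub epos finite_subset by blast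
qed

lemma complement_open:
  "openin (top_of_set L) (L - \<Union>{DD s | s. length s = m})"
  unfolding openin_euclidean_subtopology_iff
proof (intro conjI ballI)
  show "L - \<Union>{DD s | s. length s = m} \<subseteq> L" by blast
  fix y assume y: "y \<in> L - \<Union>{DD s | s. length s = m}"
  then obtain e where e: "e > 0" "finite {s. length s = m \<and> DD s \<inter> ball y e \<noteq> {}}"
    using lf_level[of y m] by blast
  define S where "S = {s. length s = m \<and> DD s \<inter> ball y e \<noteq> {}}"
  have "\<forall>s. \<exists>d>0. length s = m \<longrightarrow> ball y d \<inter> DD s = {}"
  proof
    fix s
    show "\<exists>d>0. length s = m \<longrightarrow> ball y d \<inter> DD s = {}"
    proof (cases "length s = m")
      case True
      then have "y \<in> - DD s" using y by blast
      moreover have "open (- DD s)" using D_closed by (simp add: open_Compl)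
      ultimately obtain d where "d > 0" "ball y d \<subseteq> - DD s" using open_contains_ball by blast
      then show ?thesis by blast
    qed (intro exI[of _ 1], simp)
  qed
  then obtain es where es: "\<And>s. es s > 0" "\<And>s. length s = m \<Longrightarrow> ball y (es s) \<inter> DD s = {}"
    by metis
  define e' where "e' = Min (insert e (es ` S))"
  have fS: "finite S" using e(2) unfolding S_def .
  have e'pos: "e' > 0" unfolding e'_def using fS e(1) es(1) by auto
  have e'e: "e' \<le> e" unfolding e'_def using fS by simp
  have e'es: "e' \<le> es s" if "s \<in> S" for s unfolding e'_def using fS that by simp
  show "\<exists>e>0. \<forall>x'\<in>L. dist x' y < e \<longrightarrow> x' \<in> L - \<Union>{DD s | s. length s = m}"
  proof (intro exI[of _ e'] conjI ballI impI)
    show "e' > 0" by (rule e'pos)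
    fix x' assume x': "x' \<in> L" "dist x' y < e'"
    have "x' \<notin> DD s" if s: "length s = m" for s
    proof
      assume xd: "x' \<in> DD s"
      have xb: "x' \<in> ball y e" using x'(2) e'e by (simp add: dist_commute)
      then have sS: "s \<in> S" unfolding S_def using s xd by blast
      have "dist x' y < es s" using x'(2) e'es[OF sS] by linarith
      then have "x' \<in> ball y (es s)" by (simp add: dist_commute)
      then show False using es(2)[OF s] xd by blast
    qed
    then show "x' \<in> L - \<Union>{DD s | s. length s = m}" using x'(1) by blast
  qed
qed

lemma final:
  assumes MG: "\<And>\<U>::nat \<Rightarrow> 'a set set. (\<And>n. \<forall>U\<in>\<U> n. openin (top_of_set L) U) \<Longrightarrow> (\<And>n. L \<subseteq> \<Union>(\<U> n))
     \<Longrightarrow> \<exists>\<V>. (\<forall>n. finite (\<V> n) \<and> \<V> n \<subseteq> \<U> n) \<and> L \<subseteq> (\<Union>n. \<Union>(\<V> n))"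
  shows False
proof -
  define \<U> where "\<U> n = {L \<inter> GG s | s. length s = Suc n} \<union> {L - \<Union>{DD s | s. length s = Suc n}}" for n
  have op: "\<forall>U\<in>\<U> n. openin (top_of_set L) U" for n
  proof
    fix U assume "U \<in> \<U> n"
    then consider s where "length s = Suc n" "U = L \<inter> GG s" | "U = L - \<Union>{DD s | s. length s = Suc n}"
      unfolding \<U>_def by blast
    then show "openin (top_of_set L) U"
    proof cases
      case 1 then show ?thesis using G_open[of s] by (auto simp: openin_open)
    next
      case 2 then show ?thesis using complement_open by simp
    qed
  qed
  have cov: "L \<subseteq> \<Union>(\<U> n)" for n
  proof
    fix y assume y: "y \<in> L"
    show "y \<in> \<Union>(\<U> n)"
    proof (cases "\<exists>s. length s = Suc n \<and> y \<in> DD s")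
      case True
      then obtain s where s: "length s = Suc n" "y \<in> DD s" by blast
      then have "y \<in> L \<inter> GG s" using y D_G by blast
      moreover have "L \<inter> GG s \<in> \<U> n" unfolding \<U>_def using s(1) by blast
      ultimately show ?thesis by blast
    next
      case False
      then have "y \<in> L - \<Union>{DD s | s. length s = Suc n}" using y by blast
      moreover have "L - \<Union>{DD s | s. length s = Suc n} \<in> \<U> n" unfolding \<U>_def by blast
      ultimately show ?thesis by blast
    qed
  qed
  obtain \<V> where V0: "\<forall>n. finite (\<V> n) \<and> \<V> n \<subseteq> \<U> n" and V3: "L \<subseteq> (\<Union>n. \<Union>(\<V> n))"
    using MG[of \<U>, OF op cov] by (elim exE conjE)
  have V: "\<And>n. finite (\<V> n)" "\<And>n. \<V> n \<subseteq> \<U> n" "L \<subseteq> (\<Union>n. \<Union>(\<V> n))"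
    using V0 V3 by simp_all
  have ex: "\<exists>k. L \<inter> GG (k#p) \<notin> \<V> n" for p n
  proof (rule ccontr)
    assume "\<not> ?thesis"
    then have sub: "range (\<lambda>k. L \<inter> GG (k#p)) \<subseteq> \<V> n" by blast
    have "inj (\<lambda>k. L \<inter> GG (k#p))"
    proof (rule injI)
      fix k j assume eq: "L \<inter> GG (k#p) = L \<inter> GG (j#p)"
      show "k = j"
      proof (rule ccontr)
        assume "k \<noteq> j"
        then have "GG (k#p) \<inter> GG (j#p) = {}" by (rule sib)
        moreover have "cc p k \<in> L \<inter> GG (k#p)" by (rule GL)
        ultimately show False using eq by blast
      qed
    qed
    then have "infinite (range (\<lambda>k. L \<inter> GG (k#p)))" by (rule range_inj_infinite)
    then show False using finite_subset[OF sub V(1)[of n]] by simp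
  qed
  define pp where "pp = rec_nat [] (\<lambda>n p. (SOME k. L \<inter> GG (k#p) \<notin> \<V> n) # p)"
  have pp0: "pp 0 = []" unfolding pp_def by simp
  have ppS: "pp (Suc n) = (SOME k. L \<inter> GG (k # pp n) \<notin> \<V> n) # pp n" for n unfolding pp_def by simp
  have ppV: "L \<inter> GG (pp (Suc n)) \<notin> \<V> n" for n
    unfolding ppS using someI_ex[OF ex[of "pp n" n]] .
  have len: "length (pp n) = n" for n by (induction n) (simp_all add: pp0 ppS)
  define S where "S n = CC (pp (Suc n))" for n
  have Sn: "S (Suc n) \<subseteq> S n" for n unfolding S_def ppS[of "Suc n"] by (rule C_nest)
  obtain a where a: "\<And>n. a \<in> S n"
  proof (rule decreasing_closed_nest[of S])
    show "closed (S n)" for n unfolding S_def by (rule C_closed)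
    show "S n \<noteq> {}" for n unfolding S_def by (rule C_ne)
    show "S n \<subseteq> S m" if "m \<le> n" for m n using lift_Suc_antimono_le[of S, OF Sn that] .
    show "\<exists>n. \<forall>x\<in>S n. \<forall>y\<in>S n. dist x y < \<epsilon>" if eps: "\<epsilon> > 0" for \<epsilon>
    proof -
      obtain n::nat where n: "2/Suc n < \<epsilon>"
      proof -
        obtain N::nat where "1/Suc N < \<epsilon>/2" using eps
          by (metis half_gt_zero_iff nat_approx_posE of_nat_Suc)
        then have "2/Suc N < \<epsilon>" by (simp add: field_simps)
        then show thesis by (rule that)
      qed
      have "\<forall>x\<in>S n. \<forall>y\<in>S n. dist x y < \<epsilon>"
      proof (intro ballI)
        fix x y assume "x \<in> S n" "y \<in> S n"
        then have "dist x y \<le> 2/Suc (length (pp n))"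
          unfolding S_def ppS by (rule C_diam)
        then show "dist x y < \<epsilon>" using n len[of n] by simp
      qed
      then show ?thesis by blast
    qed
  qed (rule that, assumption)
  have aQ: "a \<in> -\<rat>"
  proof
    assume "a \<in> \<rat>"
    then obtain m where m: "a = q m" using qQ by blast
    have "a \<in> CC ((SOME k. L \<inter> GG (k # pp m) \<notin> \<V> m) # pp m)" using a[of m] unfolding S_def ppS .
    moreover have "q (length (pp m)) \<notin> CC ((SOME k. L \<inter> GG (k # pp m) \<notin> \<V> m) # pp m)" by (rule C_q)
    ultimately show False using m len[of m] by simp
  qed
  define y where "y = g a"
  have yL: "y \<in> L" using aQ gL unfolding y_def by blast
  have yG: "y \<in> GG (pp (Suc n))" and yD: "y \<in> DD (pp (Suc n))" for n
  proof -
    have "a \<in> CC ((SOME k. L \<inter> GG (k # pp n) \<notin> \<V> n) # pp n) \<inter> -\<rat>"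
      using a[of n] aQ unfolding S_def ppS by blast
    then have "y \<in> Obs (pp (Suc n))" unfolding y_def ppS using gC by blast
    then show "y \<in> DD (pp (Suc n))" using Ob_D by blast
    then show "y \<in> GG (pp (Suc n))" using D_G by blast
  qed
  obtain n V where nV: "V \<in> \<V> n" "y \<in> V" using V(3) yL by blast
  then have "V \<in> \<U> n" using V(2) by blast
  then consider s where "length s = Suc n" "V = L \<inter> GG s" | "V = L - \<Union>{DD s | s. length s = Suc n}"
    unfolding \<U>_def by blast
  then show False
  proof cases
    case 1
    have "s = pp (Suc n)"
    proof (rule ccontr)
      assume "s \<noteq> pp (Suc n)"
      then have "GG s \<inter> GG (pp (Suc n)) = {}" using disj 1(1) len[of "Suc n"] by simp
      then show False using nV(2) 1(2) yG[of n] by blast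
    qed
    then show False using ppV[of n] nV(1) 1(2) by simp
  next
    case 2
    then show False using nV(2) yD[of n] len[of "Suc n"] by blast
  qed
qed

end



lemma core:
  fixes g :: "real \<Rightarrow> 'a::metric_space" and L :: "'a set"
  assumes cont: "continuous_on (-\<rat>) g" and img: "g ` (-\<rat>) = L"
    and MG: "\<And>\<U>::nat \<Rightarrow> 'a set set. (\<And>n. \<forall>U\<in>\<U> n. openin (top_of_set L) U) \<Longrightarrow> (\<And>n. L \<subseteq> \<Union>(\<U> n))
     \<Longrightarrow> \<exists>\<V>. (\<forall>n. finite (\<V> n) \<and> \<V> n \<subseteq> \<U> n) \<and> L \<subseteq> (\<Union>n. \<Union>(\<V> n))"
  shows "\<exists>K::nat \<Rightarrow> 'a set. (\<forall>n. compact (K n) \<and> K n \<subseteq> L) \<and> (\<Union>n. K n) = L"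
proof -
  define SK where "SK S \<longleftrightarrow> (\<exists>K::nat \<Rightarrow> 'a set. (\<forall>n. compact (K n) \<and> K n \<subseteq> L) \<and> S \<subseteq> (\<Union>n. K n))" for S
  have SK_mono: "SK S" if "SK T" "S \<subseteq> T" for S T
    using that unfolding SK_def by (meson order_trans)
  have SK_Un: "SK (\<Union>i. S i)" if H: "\<And>i::nat. SK (S i)" for S
  proof -
    have "\<forall>i. \<exists>K::nat \<Rightarrow> 'a set. (\<forall>n. compact (K n) \<and> K n \<subseteq> L) \<and> S i \<subseteq> (\<Union>n. K n)"
      using H unfolding SK_def by blast
    from choice[OF this] obtain Ks :: "nat \<Rightarrow> nat \<Rightarrow> 'a set" where Ks0: "\<forall>i. (\<forall>n. compact (Ks i n) \<and> Ks i n \<subseteq> L) \<and> S i \<subseteq> (\<Union>n. Ks i n)"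
      by blast
    have Ks: "\<And>i n. compact (Ks i n)" "\<And>i n. Ks i n \<subseteq> L" "\<And>i. S i \<subseteq> (\<Union>n. Ks i n)"
      using Ks0 by blast+
    define K' where "K' n = Ks (fst (prod_decode n)) (snd (prod_decode n))" for n
    have "(\<Union>i. S i) \<subseteq> (\<Union>n. K' n)"
    proof
      fix x assume "x \<in> (\<Union>i. S i)"
      then obtain i m where "x \<in> Ks i m" using Ks(3) by blast
      then have "x \<in> K' (prod_encode (i,m))" unfolding K'_def by simp
      then show "x \<in> (\<Union>n. K' n)" by blast
    qed
    moreover have "\<forall>n. compact (K' n) \<and> K' n \<subseteq> L" unfolding K'_def using Ks(1,2) by simp
    ultimately show ?thesis unfolding SK_def by blast
  qed
  have SK_empty: "SK {}" unfolding SK_def by (intro exI[of _ "\<lambda>_. {}"]) simp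
  define \<F> where "\<F> = {U. open U \<and> SK (g`(U \<inter> -\<rat>))}"
  obtain \<F>' where F': "\<F>' \<subseteq> \<F>" "countable \<F>'" "\<Union>\<F>' = \<Union>\<F>"
  proof (rule Lindelof_openin[of \<F> UNIV])
    fix S assume "S \<in> \<F>" then show "openin (top_of_set UNIV) S" unfolding \<F>_def by simp
  qed (rule that; assumption)
  define W where "W = \<Union>\<F>"
  have Wopen: "open W" unfolding W_def \<F>_def by auto
  have SKW: "SK (g`(W \<inter> -\<rat>))"
  proof (cases "\<F>' = {}")
    case True
    then have "W = {}" using F'(3) unfolding W_def by simp
    then show ?thesis using SK_empty by simp
  next
    case False
    define h where "h = from_nat_into \<F>'"
    have rh: "range h = \<F>'" unfolding h_def using False F'(2) by simp
    have "g`(W \<inter> -\<rat>) = (\<Union>i. g`(h i \<inter> -\<rat>))"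
      unfolding W_def F'(3)[symmetric] rh[symmetric] by blast
    moreover have "SK (g`(h i \<inter> -\<rat>))" for i
    proof -
      have "h i \<in> \<F>" using rh F'(1) by blast
      then show ?thesis unfolding \<F>_def by simp
    qed
    ultimately show ?thesis using SK_Un by simp
  qed
  define F where "F = -\<rat> - W"
  show ?thesis
  proof (cases "F = {}")
    case True
    then have "-\<rat> \<subseteq> W" unfolding F_def by blast
    then have "L \<subseteq> g`(W \<inter> -\<rat>)" using img by blast
    then obtain K :: "nat \<Rightarrow> 'a set" where K: "\<forall>n. compact (K n) \<and> K n \<subseteq> L" "L \<subseteq> (\<Union>n. K n)"
      using SKW unfolding SK_def by (meson order_trans)
    then have "(\<Union>n. K n) = L" by blast
    then show ?thesis using K(1) by blast
  next
    case False
    define q where "q = (of_rat \<circ> nat_to_rat_surj :: nat \<Rightarrow> real)"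
    have qQ: "range q = \<rat>" unfolding q_def by (rule Rats_eq_range_of_rat_o_nat_to_rat_surj[symmetric])
    have NC: "\<not>(\<exists>K. compact K \<and> K \<subseteq> L \<and> g`(U\<inter>F) \<subseteq> K)" if U: "open U" "U \<inter> F \<noteq> {}" for U
    proof
      assume "\<exists>K. compact K \<and> K \<subseteq> L \<and> g`(U\<inter>F) \<subseteq> K"
      then obtain K where K: "compact K" "K \<subseteq> L" "g`(U\<inter>F) \<subseteq> K" by blast
      have SKK: "SK K" unfolding SK_def using K(1,2) by (intro exI[of _ "\<lambda>_. K"]) auto
      define S where "S i = (if i = 0 then K else g`(W \<inter> -\<rat>))" for i :: nat
      have "SK (S i)" for i unfolding S_def using SKK SKW by simp
      then have SKU: "SK (\<Union>i. S i)" by (rule SK_Un)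
      have "U \<inter> -\<rat> \<subseteq> (U \<inter> F) \<union> (W \<inter> -\<rat>)" unfolding F_def by blast
      then have "g`(U \<inter> -\<rat>) \<subseteq> g`(U \<inter> F) \<union> g`(W \<inter> -\<rat>)" by blast
      also have "\<dots> \<subseteq> (\<Union>i. S i)" using K(3) unfolding S_def
        by (auto intro: UN_I[of 0] UN_I[of 1])
      finally have "SK (g`(U \<inter> -\<rat>))" using SKU SK_mono by blast
      then have "U \<in> \<F>" unfolding \<F>_def using U(1) by simp
      then have "U \<subseteq> W" unfolding W_def by blast
      then show False using U(2) unfolding F_def by blast
    qed
    have gL: "g ` (-\<rat>) \<subseteq> L" using img by simp
    have FQ: "F \<subseteq> -\<rat>" unfolding F_def by blast
    interpret hur g L F q
      by (unfold_locales) (use cont FQ gL NC qQ False in auto)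
    have False using final MG by blast
    then show ?thesis ..
  qed
qed

theorem corollary3p24:
  fixes X :: "'a topology"
  assumes "completely_regular_space X"
    and "menger_space X"
    and "proper_K_lusin X"
  shows "sigma_compact_space X"
proof -
  obtain f :: "'a \<Rightarrow> nat \<Rightarrow> real" and L where
    L: "L \<subseteq> topspace real_omega" "lusin_space (subtopology real_omega L)"
       "perfect_map X (subtopology real_omega L) f"
    using assms(3) unfolding proper_K_lusin_def by blast
  have ro: "real_omega = euclidean" unfolding real_omega_def by (rule euclidean_product_topology)
  have pm: "continuous_map X (top_of_set L) f" "proper_map X (top_of_set L) f" "f ` topspace X = L"
    using L(3) unfolding perfect_map_def ro by auto
  obtain g where g: "continuous_map irrationals_top (top_of_set L) g"
      "g ` topspace irrationals_top = L"
    using L(2) unfolding lusin_space_def ro by auto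
  have cont: "continuous_on (-\<rat>) g" and img: "g ` (-\<rat>) = L"
    using g unfolding irrationals_top_def by auto
  have MG: "\<exists>\<V>. (\<forall>n. finite (\<V> n) \<and> \<V> n \<subseteq> \<U> n) \<and> L \<subseteq> (\<Union>n. \<Union>(\<V> n))"
    if op: "\<And>n. \<forall>U\<in>\<U> n. openin (top_of_set L) U" and cv: "\<And>n. L \<subseteq> \<Union>(\<U> n)"
    for \<U> :: "nat \<Rightarrow> (nat \<Rightarrow> real) set set"
  proof -
    define pre where "pre U = {x \<in> topspace X. f x \<in> U}" for U
    define \<U>' where "\<U>' n = pre ` \<U> n" for n
    have oc: "open_cover X (\<U>' n)" for n
      unfolding open_cover_def
    proof (intro conjI ballI subsetI)
      fix V assume "V \<in> \<U>' n"
      then obtain U where U: "U \<in> \<U> n" "V = pre U" unfolding \<U>'_def by blast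
      show "openin X V" unfolding U(2) pre_def
        by (rule openin_continuous_map_preimage[OF pm(1)]) (use op U(1) in blast)
    next
      fix x assume x: "x \<in> topspace X"
      then have "f x \<in> L" using pm(3) by blast
      then obtain U where "U \<in> \<U> n" "f x \<in> U" using cv[of n] by blast
      then show "x \<in> \<Union>(\<U>' n)" unfolding \<U>'_def pre_def using x by blast
    qed
    have "\<exists>\<V>. (\<forall>n. finite (\<V> n) \<and> \<V> n \<subseteq> \<U>' n) \<and> topspace X \<subseteq> (\<Union>n. \<Union>(\<V> n))"
      using assms(2) oc unfolding menger_space_def by simp
    then obtain \<V>' where V': "\<forall>n. finite (\<V>' n) \<and> \<V>' n \<subseteq> \<U>' n" "topspace X \<subseteq> (\<Union>n. \<Union>(\<V>' n))"
      by (elim exE conjE)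
    have "\<forall>n. \<exists>C. C \<subseteq> \<U> n \<and> finite C \<and> \<V>' n = pre ` C"
    proof
      fix n
      have "finite (\<V>' n)" "\<V>' n \<subseteq> pre ` \<U> n" using V'(1) unfolding \<U>'_def by auto
      then show "\<exists>C. C \<subseteq> \<U> n \<and> finite C \<and> \<V>' n = pre ` C"
        using finite_subset_image by blast
    qed
    from choice[OF this] obtain \<V> where V: "\<forall>n. \<V> n \<subseteq> \<U> n \<and> finite (\<V> n) \<and> \<V>' n = pre ` \<V> n"
      by blast
    have "L \<subseteq> (\<Union>n. \<Union>(\<V> n))"
    proof
      fix y assume "y \<in> L"
      then obtain x where x: "x \<in> topspace X" "y = f x" using pm(3) by blast
      obtain n V where nV: "V \<in> \<V>' n" "x \<in> V" using V'(2) x(1) by blast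
      have "\<V>' n = pre ` \<V> n" using V by simp
      then obtain U where U: "U \<in> \<V> n" "V = pre U" using nV(1) by blast
      have "y \<in> U" using nV(2) U(2) x(2) unfolding pre_def by simp
      then show "y \<in> (\<Union>n. \<Union>(\<V> n))" using U(1) by blast
    qed
    moreover have "\<forall>n. finite (\<V> n) \<and> \<V> n \<subseteq> \<U> n" using V by simp
    ultimately show ?thesis by blast
  qed
  have exK: "\<exists>K::nat \<Rightarrow> (nat \<Rightarrow> real) set. (\<forall>n. compact (K n) \<and> K n \<subseteq> L) \<and> (\<Union>n. K n) = L"
    by (rule core[OF cont img]) (rule MG)
  obtain K :: "nat \<Rightarrow> (nat \<Rightarrow> real) set" where K: "\<forall>n. compact (K n) \<and> K n \<subseteq> L" "(\<Union>n. K n) = L"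
    using exK by (elim exE conjE)
  define K' where "K' n = {x \<in> topspace X. f x \<in> K n}" for n
  show ?thesis unfolding sigma_compact_space_def
  proof (intro exI[of _ K'] conjI allI)
    fix n
    have "compactin (top_of_set L) (K n)" using K(1) by (simp add: compactin_subtopology)
    then show "compactin X (K' n)" unfolding K'_def by (rule compactin_proper_map_preimage[OF pm(2)])
  next
    show "(\<Union>n. K' n) = topspace X"
    proof
      show "(\<Union>n. K' n) \<subseteq> topspace X" unfolding K'_def by blast
      show "topspace X \<subseteq> (\<Union>n. K' n)"
      proof
        fix x assume x: "x \<in> topspace X"
        then have "f x \<in> L" using pm(3) by blast
        then obtain n where "f x \<in> K n" using K(2) by blast
        then show "x \<in> (\<Union>n. K' n)" unfolding K'_def using x by blast
      qed
    qed
  qed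
qed


end
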